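(* Consider the system of ordinary differential equations \[ \dot u=r_{1}u(1-u)-a_{12}uv-a_{13}uw,\qquad \dot v=r_{2}v(1-v)+a_{21}uv,\qquad \dot w=-\mu w+a_{31}uw, \] with all parameters $r_1,r_2,\mu,a_{12},a_{13},a_{21},a_{31}$ positive. Then every solution with nonnegative initial data is bounded for $t\ge0$.
   Context: Solutions starting in the nonnegative orthant remain nonnegative. *)

theory Defs
  imports Complex_Main
begin

end

theory Submission
  imports Defs "HOL-Analysis.Analysis"
begin

lemma nonneg_lemma:
  fixes f g :: "real \<Rightarrow> real"
  assumes d: "\<And>s. s \<ge> 0 \<Longrightarrow> (f has_real_derivative (f s * g s)) (at s within {0..})"
    and c: "continuous_on {0..} g" and f0: "f 0 \<ge> 0" and T: "T \<ge> 0"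
  shows "f T \<ge> 0"
proof -
  define G where "G x = integral {0..x} g" for x
  have cT: "continuous_on {0..T} g" using c by (rule continuous_on_subset) auto
  have "\<And>x. x \<in> {0..T} \<Longrightarrow> ((\<lambda>x. f x * exp (- G x)) has_real_derivative 0) (at x within {0..T})"
  proof -
    fix x assume x: "x \<in> {0..T}"
    have dG: "(G has_real_derivative g x) (at x within {0..T})"
      unfolding G_def[abs_def] by (rule integral_has_real_derivative[OF cT x])
    have df: "(f has_real_derivative (f x * g x)) (at x within {0..T})"
      using d[of x] x by (auto intro: DERIV_subset)
    have "((\<lambda>x. f x * exp (- G x)) has_real_derivative (f x * g x) * exp (- G x) + f x * (exp (- G x) * (- g x))) (at x within {0..T})"
    proof -
      have dE: "((\<lambda>x. exp (- G x)) has_real_derivative exp (- G x) * (- g x)) (at x within {0..T})"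
        using dG by (auto intro!: derivative_eq_intros)
      show ?thesis using DERIV_mult[OF df dE] by simp
    qed
    then show "((\<lambda>x. f x * exp (- G x)) has_real_derivative 0) (at x within {0..T})"
      by (simp add: algebra_simps)
  qed
  then obtain k where k: "\<forall>x\<in>{0..T}. f x * exp (- G x) = k"
    using has_field_derivative_zero_constant[of "{0..T}"] by blast
  have "k = f 0" using k[rule_format, of 0] T by (simp add: G_def)
  then have "f T = f 0 * exp (G T)" using k[rule_format, of T] T
    by (simp add: exp_minus field_simps)
  then show ?thesis using f0 by simp
qed

lemma bound_lemma:
  fixes f f' :: "real \<Rightarrow> real"
  assumes d: "\<And>s. s \<ge> 0 \<Longrightarrow> (f has_real_derivative f' s) (at s within {0..})"
    and neg: "\<And>s. s > 0 \<Longrightarrow> f s > M \<Longrightarrow> f' s \<le> 0" and f0: "f 0 \<le> M" and t: "t \<ge> 0"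
  shows "f t \<le> M"
proof (rule ccontr)
  assume ft: "\<not> f t \<le> M"
  define S where "S = {0..t} \<inter> f -` {..M}"
  have cont: "continuous_on {0..t} f"
    by (rule DERIV_continuous_on[where D=f']) (auto intro: DERIV_subset d)
  have "closed S" unfolding S_def
    by (rule continuous_closed_preimage[OF cont]) auto
  moreover have "0 \<in> S" using f0 t by (auto simp: S_def)
  moreover have "bdd_above S" unfolding S_def by (auto intro: bdd_aboveI[of _ t])
  ultimately have t0S: "Sup S \<in> S" by (intro closed_contains_Sup) auto
  define t0 where "t0 = Sup S"
  have t0: "0 \<le> t0" "t0 \<le> t" "f t0 \<le> M" using t0S by (auto simp: S_def t0_def)
  have gt: "f s > M" if "t0 < s" "s \<le> t" for s
  proof (rule ccontr)
    assume "\<not> f s > M"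
    then have "s \<in> S" using that t0 by (auto simp: S_def)
    then have "s \<le> t0" unfolding t0_def using \<open>bdd_above S\<close> by (rule cSup_upper)
    then show False using that by simp
  qed
  have "t0 < t" using t0 ft by (cases "t0 = t") auto
  have "\<exists>x\<in>{t0<..<t}. f t - f t0 = (\<lambda>h. h * f' x) (t - t0)"
  proof (rule mvt_simple[OF \<open>t0 < t\<close>])
    fix x assume "t0 \<le> x" "x \<le> t"
    then have "(f has_real_derivative f' x) (at x within {t0..t})"
      using t0 by (intro DERIV_subset[OF d]) auto
    then show "(f has_derivative (\<lambda>h. h * f' x)) (at x within {t0..t})"
      by (simp add: has_field_derivative_def mult.commute[of _ "f' x"])
  qed
  then obtain x where x: "t0 < x" "x < t" "f t - f t0 = (t - t0) * f' x" by auto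
  have "f' x \<le> 0" using neg[of x] gt[of x] x t0 by auto
  then have "(t - t0) * f' x \<le> 0" using \<open>t0 < t\<close> by (simp add: mult_nonneg_nonpos)
  then show False using x t0 ft by linarith
qed

theorem lemma1:
  fixes r1 r2 \<mu> a12 a13 a21 a31 :: real
    and u v w :: "real \<Rightarrow> real"
  assumes "r1 > 0" "r2 > 0" "\<mu> > 0" "a12 > 0" "a13 > 0" "a21 > 0" "a31 > 0"
    and "\<And>t. t \<ge> 0 \<Longrightarrow>
           (u has_real_derivative (r1 * u t * (1 - u t) - a12 * u t * v t - a13 * u t * w t))
             (at t within {0..})"
    and "\<And>t. t \<ge> 0 \<Longrightarrow>
           (v has_real_derivative (r2 * v t * (1 - v t) + a21 * u t * v t))
             (at t within {0..})"
    and "\<And>t. t \<ge> 0 \<Longrightarrow>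
           (w has_real_derivative (- \<mu> * w t + a31 * u t * w t))
             (at t within {0..})"
    and "u 0 \<ge> 0" "v 0 \<ge> 0" "w 0 \<ge> 0"
  shows "\<exists>B. \<forall>t\<ge>0. \<bar>u t\<bar> \<le> B \<and> \<bar>v t\<bar> \<le> B \<and> \<bar>w t\<bar> \<le> B"
proof -
  note du = assms(8) and dv = assms(9) and dw = assms(10)
  have cu: "continuous_on {0..} u" by (rule DERIV_continuous_on) (use du in auto)
  have cv: "continuous_on {0..} v" by (rule DERIV_continuous_on) (use dv in auto)
  have cw: "continuous_on {0..} w" by (rule DERIV_continuous_on) (use dw in auto)
  have u0: "u t \<ge> 0" if "t \<ge> 0" for t
  proof (rule nonneg_lemma[where T=t and g="\<lambda>s. r1 * (1 - u s) - a12 * v s - a13 * w s"])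
    show "(u has_real_derivative u s * (r1 * (1 - u s) - a12 * v s - a13 * w s)) (at s within {0..})"
      if "s \<ge> 0" for s
      by (rule DERIV_cong[OF du[OF that]]) (simp add: algebra_simps)
    show "continuous_on {0..} (\<lambda>s. r1 * (1 - u s) - a12 * v s - a13 * w s)"
      by (intro continuous_intros cu cv cw)
  qed (use assms that in auto)
  have v0: "v t \<ge> 0" if "t \<ge> 0" for t
  proof (rule nonneg_lemma[where T=t and g="\<lambda>s. r2 * (1 - v s) + a21 * u s"])
    show "(v has_real_derivative v s * (r2 * (1 - v s) + a21 * u s)) (at s within {0..})"
      if "s \<ge> 0" for s
      by (rule DERIV_cong[OF dv[OF that]]) (simp add: algebra_simps)
    show "continuous_on {0..} (\<lambda>s. r2 * (1 - v s) + a21 * u s)"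
      by (intro continuous_intros cu cv cw)
  qed (use assms that in auto)
  have w0: "w t \<ge> 0" if "t \<ge> 0" for t
  proof (rule nonneg_lemma[where T=t and g="\<lambda>s. - \<mu> + a31 * u s"])
    show "(w has_real_derivative w s * (- \<mu> + a31 * u s)) (at s within {0..})"
      if "s \<ge> 0" for s
      by (rule DERIV_cong[OF dw[OF that]]) (simp add: algebra_simps)
    show "continuous_on {0..} (\<lambda>s. - \<mu> + a31 * u s)"
      by (intro continuous_intros cu cv cw)
  qed (use assms that in auto)
  define Mu where "Mu = max 1 (u 0)"
  have uB: "u t \<le> Mu" if "t \<ge> 0" for t
  proof (rule bound_lemma[OF du])
    fix s :: real assume s: "s > 0" "u s > Mu"
    then have "u s \<ge> 1" by (simp add: Mu_def)
    have "r1 * u s * (1 - u s) \<le> 0"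
      using \<open>u s \<ge> 1\<close> assms(1) by (simp add: mult_nonneg_nonpos)
    moreover have "a12 * u s * v s \<ge> 0" using assms u0 v0 s by simp
    moreover have "a13 * u s * w s \<ge> 0" using assms u0 w0 s by simp
    ultimately show "r1 * u s * (1 - u s) - a12 * u s * v s - a13 * u s * w s \<le> 0" by linarith
  qed (use that in \<open>auto simp: Mu_def\<close>)
  have Mu0: "Mu \<ge> 0" by (simp add: Mu_def)
  define Mv where "Mv = max (1 + a21 * Mu / r2) (v 0)"
  have vB: "v t \<le> Mv" if "t \<ge> 0" for t
  proof (rule bound_lemma[OF dv])
    fix s :: real assume s: "s > 0" "v s > Mv"
    then have "v s > 1 + a21 * Mu / r2" by (simp add: Mv_def)
    then have "r2 * v s > r2 + a21 * Mu" using assms(2) by (simp add: field_simps)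
    moreover have "a21 * u s \<le> a21 * Mu" using uB[of s] s assms(6) by simp
    ultimately have "r2 * (1 - v s) + a21 * u s \<le> 0" by (simp add: algebra_simps)
    then have "v s * (r2 * (1 - v s) + a21 * u s) \<le> 0"
      using v0[of s] s by (simp add: mult_nonneg_nonpos)
    then show "r2 * v s * (1 - v s) + a21 * u s * v s \<le> 0" by (simp add: algebra_simps)
  qed (use that in \<open>auto simp: Mv_def\<close>)
  define L where "L s = a31 * u s + a13 * w s" for s
  define K where "K = max (a31 * Mu + a31 * r1 * Mu / \<mu>) (L 0)"
  have dL: "(L has_real_derivative (a31 * (r1 * u s * (1 - u s) - a12 * u s * v s - a13 * u s * w s)
     + a13 * (- \<mu> * w s + a31 * u s * w s))) (at s within {0..})" if "s \<ge> 0" for s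
    unfolding L_def[abs_def]
    by (intro DERIV_add DERIV_cmult du dw that)
  have LB: "L t \<le> K" if "t \<ge> 0" for t
  proof (rule bound_lemma[OF dL])
    fix s :: real assume s: "s > 0" "L s > K"
    have e: "a31 * (r1 * u s * (1 - u s) - a12 * u s * v s - a13 * u s * w s)
     + a13 * (- \<mu> * w s + a31 * u s * w s) = a31 * r1 * u s - a31 * r1 * (u s * u s) - a31 * a12 * (u s * v s) - a13 * \<mu> * w s"
      by (simp add: algebra_simps)
    have "a31 * r1 * (u s * u s) \<ge> 0" using assms by simp
    moreover have "a31 * a12 * (u s * v s) \<ge> 0" using assms u0 v0 s by simp
    moreover have "a31 * r1 * u s \<le> a31 * r1 * Mu" using uB[of s] s assms by simp
    moreover have "a13 * w s > a31 * r1 * Mu / \<mu>"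
    proof -
      have "a31 * u s \<le> a31 * Mu" using uB[of s] s assms by simp
      then show ?thesis using s(2) unfolding L_def K_def by linarith
    qed
    then have "a13 * \<mu> * w s > a31 * r1 * Mu" using assms(3) by (simp add: field_simps)
    ultimately show "a31 * (r1 * u s * (1 - u s) - a12 * u s * v s - a13 * u s * w s)
     + a13 * (- \<mu> * w s + a31 * u s * w s) \<le> 0" unfolding e by linarith
  qed (use that in \<open>auto simp: K_def\<close>)
  have wB: "w t \<le> K / a13" if "t \<ge> 0" for t
  proof -
    have "a13 * w t \<le> K" using LB[OF that] u0[OF that] assms(7) unfolding L_def
      by (smt (verit) mult_nonneg_nonneg)
    then show ?thesis using assms(5) by (simp add: field_simps)
  qed
  show ?thesis
    apply (rule exI[of _ "max Mu (max Mv (K / a13))"])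
    using uB vB wB u0 v0 w0 by fastforce
qed

end
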